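(* Let $K\in C(\mathbb{R}^3\setminus\{0\})\cap L^\infty(\mathbb{R}^3)$ be homogeneous of degree $0$ (i.e. $K(\lambda x)=K(x)$ for all $\lambda>0$, $x\ne0$) and $(1,1)$-distance-orthogonal in $\mathbb{R}^3$. Then $K\equiv0$.
   Context: $K\in C(\mathbb{R}^n\setminus\{0\})\cap L^\infty(\mathbb{R}^n)$ is $(d,\alpha)$-distance-orthogonal if for every $d$-dimensional affine plane (here: line, $d=1$) $E$ and every $x\notin E$, $\int_EK(x-y)|x-y|^{-d-\alpha}\,d\mathcal H^d(y)=0$; here $n=3$, $d=1$, $\alpha=1$. *)

theory Defs
  imports "HOL-Analysis.Analysis"
begin

text \<open>The one-dimensional Hausdorff measure on the affine line
  E = {a + t u | t real} (with norm u = 1) is the push-forward of Lebesgue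
  measure on the real line under the unit-speed parametrisation t to a + t u.\<close>

definition affine_line :: "'a::real_normed_vector \<Rightarrow> 'a \<Rightarrow> 'a set" where
  "affine_line a u = {a + t *\<^sub>R u | t. True}"

definition line_distance_orthogonal ::
    "real \<Rightarrow> ('a::euclidean_space \<Rightarrow> real) \<Rightarrow> bool" where
  "line_distance_orthogonal \<alpha> K \<longleftrightarrow>
     (\<forall>a u x. norm u = 1 \<longrightarrow> x \<notin> affine_line a u \<longrightarrow>
        (let f = (\<lambda>t::real. K (x - (a + t *\<^sub>R u)) *
                    norm (x - (a + t *\<^sub>R u)) powr (- 1 - \<alpha>))
         in integrable lborel f \<and> integral\<^sup>L lborel f = 0))"

end

theory Submission
  imports Defs "HOL-Analysis.Analysis"
begin
lemma aux0': fixes a b c K :: real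
  shows "c*c = 1 - b*b \<Longrightarrow> (K+1)*a*c*c - a*b*b = (K+1)*a - (K+2)*(a*b*b)"
  by algebra
lemma aux1: fixes b c :: real
  assumes "c*c = 1 - b*b"
  shows "real (k+1) * b^k * c * c - b^(k+1) * b = real (k+1) * b^k - real (k+2) * b^(k+2)"
proof -
  have e: "b^(k+1) = b^k*b" "b^(k+2) = b^k*b*b" "real (k+1) = real k + 1" "real (k+2) = real k + 2"
    by (simp_all add: power_add numeral_eq_Suc)
  show ?thesis unfolding e using aux0'[OF assms] by blast
qed
lemma aux0: fixes a b c K :: real
  shows "c*c = 1 - b*b \<Longrightarrow> (K+1)*a*(-c)*c + a*b*b = (K+2)*(a*b*b) - (K+1)*a"
  by algebra
lemma aux2: fixes b c :: real
  assumes "c*c = 1 - b*b"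
  shows "real (k+1) * b^k * (-c) * c + b^(k+1) * b = real (k+2) * b^(k+2) - real (k+1) * b^k"
proof -
  have e: "b^(k+1) = b^k*b" "b^(k+2) = b^k*b*b" "real (k+1) = real k + 1" "real (k+2) = real k + 2"
    by (simp_all add: power_add numeral_eq_Suc)
  show ?thesis unfolding e using aux0[OF assms] by blast
qed

lemma sin_pow_rec:
  "real (k+2) * integral {0..pi/2} (\<lambda>x. sin x ^ (k+2)) = real (k+1) * integral {0..pi/2} (\<lambda>x. sin x ^ k)"
proof -
  have d: "((\<lambda>x. sin x ^ (k+1) * cos x) has_vector_derivative
          (real (k+1) * sin x ^ k - real (k+2) * sin x ^ (k+2))) (at x within {0..pi/2})" for x
  proof -
    have "((\<lambda>x. sin x ^ (k+1) * cos x) has_real_derivative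
          (real (k+1) * sin x ^ k * cos x * cos x - sin x ^ (k+1) * sin x)) (at x within {0..pi/2})"
      by (rule derivative_eq_intros refl)+ simp
    moreover have "real (k+1) * sin x ^ k * cos x * cos x - sin x ^ (k+1) * sin x
       = real (k+1) * sin x ^ k - real (k+2) * sin x ^ (k+2)"
    proof -
      have "cos x * cos x = 1 - sin x * sin x" using sin_squared_eq[of x] by (simp add: power2_eq_square)
      from aux1[OF this, of k] show ?thesis .
    qed
    ultimately show ?thesis by (simp add: has_real_derivative_iff_has_vector_derivative)
  qed
  have "((\<lambda>x. real (k+1) * sin x ^ k - real (k+2) * sin x ^ (k+2)) has_integral
        (sin (pi/2) ^ (k+1) * cos (pi/2) - sin 0 ^ (k+1) * cos 0)) {0..pi/2}"
    by (rule fundamental_theorem_of_calculus[OF _ d]) simp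
  then have h0: "((\<lambda>x. real (k+1) * sin x ^ k - real (k+2) * sin x ^ (k+2)) has_integral 0) {0..pi/2}"
    by simp
  have i1: "(\<lambda>x. sin x ^ k) integrable_on {0..pi/2}" "(\<lambda>x. sin x ^ (k+2)) integrable_on {0..pi/2}"
    by (auto intro!: integrable_continuous_real continuous_intros)
  have "((\<lambda>x. real (k+1) * sin x ^ k - real (k+2) * sin x ^ (k+2)) has_integral
     (real (k+1) * integral {0..pi/2} (\<lambda>x. sin x ^ k) - real (k+2) * integral {0..pi/2} (\<lambda>x. sin x ^ (k+2)))) {0..pi/2}"
    by (intro has_integral_diff has_integral_mult_right integrable_integral i1)
  from has_integral_unique[OF this h0] show ?thesis by simp
qed

lemma cos_pow_rec:
  "real (k+2) * integral {0..2*pi} (\<lambda>x. cos x ^ (k+2)) = real (k+1) * integral {0..2*pi} (\<lambda>x. cos x ^ k)"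
proof -
  have d: "((\<lambda>x. cos x ^ (k+1) * sin x) has_vector_derivative
          (real (k+2) * cos x ^ (k+2) - real (k+1) * cos x ^ k)) (at x within {0..2*pi})" for x
  proof -
    have "((\<lambda>x. cos x ^ (k+1) * sin x) has_real_derivative
          (real (k+1) * cos x ^ k * (- sin x) * sin x + cos x ^ (k+1) * cos x)) (at x within {0..2*pi})"
      by (rule derivative_eq_intros refl)+ simp
    moreover have "real (k+1) * cos x ^ k * (- sin x) * sin x + cos x ^ (k+1) * cos x
       = real (k+2) * cos x ^ (k+2) - real (k+1) * cos x ^ k"
    proof -
      have "sin x * sin x = 1 - cos x * cos x" using sin_squared_eq[of x] by (simp add: power2_eq_square)
      from aux2[OF this, of k] show ?thesis by simp
    qed
    ultimately show ?thesis by (simp add: has_real_derivative_iff_has_vector_derivative)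
  qed
  have "((\<lambda>x. real (k+2) * cos x ^ (k+2) - real (k+1) * cos x ^ k) has_integral
        (cos (2*pi) ^ (k+1) * sin (2*pi) - cos 0 ^ (k+1) * sin 0)) {0..2*pi}"
    by (rule fundamental_theorem_of_calculus[OF _ d]) simp
  then have h0: "((\<lambda>x. real (k+2) * cos x ^ (k+2) - real (k+1) * cos x ^ k) has_integral 0) {0..2*pi}"
    by simp
  have i1: "(\<lambda>x. cos x ^ k) integrable_on {0..2*pi}" "(\<lambda>x. cos x ^ (k+2)) integrable_on {0..2*pi}"
    by (auto intro!: integrable_continuous_real continuous_intros)
  have "((\<lambda>x. real (k+2) * cos x ^ (k+2) - real (k+1) * cos x ^ k) has_integral
     (real (k+2) * integral {0..2*pi} (\<lambda>x. cos x ^ (k+2)) - real (k+1) * integral {0..2*pi} (\<lambda>x. cos x ^ k))) {0..2*pi}"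
    by (intro has_integral_diff has_integral_mult_right integrable_integral i1)
  from has_integral_unique[OF this h0] show ?thesis by simp
qed

lemma sin_pow_0: "integral {0..pi/2} (\<lambda>x. sin x ^ 0) = pi/2" by simp
lemma sin_pow_1: "integral {0..pi/2} (\<lambda>x. sin x ^ 1) = 1"
proof -
  have "((\<lambda>x. sin x) has_integral (- cos (pi/2) - (- cos 0))) {0..pi/2}"
    by (rule fundamental_theorem_of_calculus) (auto intro!: derivative_eq_intros simp: has_real_derivative_iff_has_vector_derivative[symmetric])
  then show ?thesis by (simp add: integral_unique)
qed
lemma cos_pow_0: "integral {0..2*pi} (\<lambda>x. cos x ^ 0) = 2*pi" by simp
lemma cos_pow_1: "integral {0..2*pi} (\<lambda>x. cos x ^ 1) = 0"
proof -
  have "((\<lambda>x. cos x) has_integral (sin (2*pi) - sin 0)) {0..2*pi}"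
    by (rule fundamental_theorem_of_calculus) (auto intro!: derivative_eq_intros simp: has_real_derivative_iff_has_vector_derivative[symmetric])
  then show ?thesis by (simp add: integral_unique)
qed

lemma helper0:
  fixes X Y Z W P p q r :: real
  assumes "p * X = q * Y" "q * Z = r * W"
  shows "q * (p * (X * Z)) = q * (r * (Y * W))"
  using assms by algebra

lemma helper:
  fixes X Y Z W P :: real
  assumes "real (i+3) * X = real (i+2) * Y" "real (i+2) * Z = real (i+1) * W"
    "Y * W = P / real (i+1)"
  shows "X * Z = P / real (i+3)"
proof -
  have "real (i+3) * (X * Z) = real (i+1) * (Y * W)"
    using helper0[OF assms(1,2)] by simp
  then show ?thesis using assms(3) by (simp add: field_simps)
qed

lemma bc_prod:
  "integral {0..pi/2} (\<lambda>x. sin x ^ (i+1)) * integral {0..2*pi} (\<lambda>x. cos x ^ i)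
     = pi * (1 + (-1)^i) / real (i+1)"
proof -
  let ?b = "\<lambda>k. integral {0..pi/2} (\<lambda>x. sin x ^ k)"
  let ?c = "\<lambda>k. integral {0..2*pi} (\<lambda>x. cos x ^ k)"
  let ?P = "\<lambda>i. ?b (i+1) * ?c i = pi * (1 + (-1)^i) / real (i+1)"
  have "?P i \<and> ?P (i+1)"
  proof (induction i)
    case 0
    show ?case using sin_pow_1 cos_pow_0 cos_pow_1 by (simp add: power2_eq_square)
  next
    case (Suc i)
    have e3: "i+1+2 = i+3" "i+1+1 = i+2" by simp_all
    have b0: "real (i+3) * ?b (i+3) = real (i+2) * ?b (i+1)"
      using sin_pow_rec[of "i+1"] unfolding e3 .
    have c0: "real (i+2) * ?c (i+2) = real (i+1) * ?c i"
      using cos_pow_rec[of i] .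
    have e5: "(-1::real)^(i+2) = (-1)^i" by simp
    have e4: "i+2+1 = i+3" by simp
    have "?P (i+2)" unfolding e4 e5
      by (rule helper[OF b0 c0 Suc.IH[THEN conjunct1]])
    moreover have "Suc i + 1 = i + 2" "Suc i = i + 1" by simp_all
    ultimately show ?case using Suc.IH by metis
  qed
  then show ?thesis by simp
qed

lemma inner_poly:
  "integral {0..2*pi} (\<lambda>t. \<Sum>i\<le>N. a i * (r * cos t)^i)
     = (\<Sum>i\<le>N. a i * (r^i * integral {0..2*pi} (\<lambda>t. cos t ^ i)))"
proof -
  have "((\<lambda>t. \<Sum>i\<le>N. a i * (r^i * cos t ^ i)) has_integral
     (\<Sum>i\<le>N. a i * (r^i * integral {0..2*pi} (\<lambda>t. cos t ^ i)))) {0..2*pi}"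
    by (intro has_integral_sum finite_atMost has_integral_mult_right integrable_integral
          integrable_continuous_real continuous_intros)
  then show ?thesis by (simp add: power_mult_distrib integral_unique)
qed

lemma pow_int: "0 \<le> s \<Longrightarrow> ((\<lambda>x::real. x^i) has_integral (s^(i+1) / real (i+1))) {0..s}"
proof -
  assume s: "0 \<le> s"
  have "((\<lambda>x::real. x^i) has_integral (s^(i+1) / real (i+1) - 0^(i+1) / real (i+1))) {0..s}"
  proof (rule fundamental_theorem_of_calculus[OF s])
    fix x :: real
    have "((\<lambda>x. x^(i+1)) has_real_derivative real (i+1) * x^i) (at x within {0..s})"
      using DERIV_pow[of "i+1" x] by simp
    then have "((\<lambda>x. x^(i+1) / real (i+1)) has_real_derivative real (i+1) * x^i / real (i+1)) (at x within {0..s})"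
      by (rule DERIV_cdivide)
    then show "((\<lambda>x. x^(i+1) / real (i+1)) has_vector_derivative x^i) (at x within {0..s})"
      by (simp add: has_real_derivative_iff_has_vector_derivative[symmetric] del: of_nat_add)
  qed
  then show ?thesis by simp
qed

lemma G_poly:
  assumes s: "0 \<le> s"
  shows "integral {0..pi/2} (\<lambda>p. s * sin p * integral {0..2*pi} (\<lambda>t. \<Sum>i\<le>N. a i * (s * sin p * cos t)^i))
     = pi * integral {0..s} (\<lambda>x. (\<Sum>i\<le>N. a i * x^i) + (\<Sum>i\<le>N. a i * (-x)^i))"
proof -
  let ?c = "\<lambda>k. integral {0..2*pi} (\<lambda>x. cos x ^ k)"
  let ?b = "\<lambda>k. integral {0..pi/2} (\<lambda>x. sin x ^ k)"
  have f: "s * sin p * integral {0..2*pi} (\<lambda>t. \<Sum>i\<le>N. a i * (s * sin p * cos t)^i)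
     = (\<Sum>i\<le>N. (a i * s^(i+1) * ?c i) * sin p ^ (i+1))" for p
    unfolding inner_poly sum_distrib_left
    by (rule sum.cong) (simp_all add: power_mult_distrib)
  have "((\<lambda>p. \<Sum>i\<le>N. (a i * s^(i+1) * ?c i) * sin p ^ (i+1)) has_integral
        (\<Sum>i\<le>N. (a i * s^(i+1) * ?c i) * ?b (i+1))) {0..pi/2}"
    by (intro has_integral_sum finite_atMost has_integral_mult_right integrable_integral
          integrable_continuous_real continuous_intros)
  then have L: "integral {0..pi/2} (\<lambda>p. s * sin p * integral {0..2*pi} (\<lambda>t. \<Sum>i\<le>N. a i * (s * sin p * cos t)^i))
       = (\<Sum>i\<le>N. (a i * s^(i+1) * ?c i) * ?b (i+1))"
    unfolding f by (rule integral_unique)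
  have g: "(\<Sum>i\<le>N. a i * x^i) + (\<Sum>i\<le>N. a i * (-x)^i) = (\<Sum>i\<le>N. (a i * (1 + (-1)^i)) * x^i)" for x :: real
    unfolding sum.distrib[symmetric]
    by (rule sum.cong) (simp_all add: power_minus' algebra_simps)
  have "((\<lambda>x. \<Sum>i\<le>N. (a i * (1 + (-1)^i)) * x^i) has_integral
        (\<Sum>i\<le>N. (a i * (1 + (-1)^i)) * (s^(i+1) / real (i+1)))) {0..s}"
    by (intro has_integral_sum finite_atMost has_integral_mult_right pow_int s)
  then have R: "integral {0..s} (\<lambda>x. (\<Sum>i\<le>N. a i * x^i) + (\<Sum>i\<le>N. a i * (-x)^i))
     = (\<Sum>i\<le>N. (a i * (1 + (-1)^i)) * (s^(i+1) / real (i+1)))"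
    unfolding g by (rule integral_unique)
  show ?thesis unfolding L R sum_distrib_left
  proof (rule sum.cong)
    fix i assume "i \<in> {..N}"
    have "a i * s ^ (i + 1) * ?c i * ?b (i + 1) = a i * s ^ (i + 1) * (?b (i + 1) * ?c i)" by simp
    also have "\<dots> = a i * s ^ (i + 1) * (pi * (1 + (-1)^i) / real (i+1))" unfolding bc_prod ..
    finally show "a i * s ^ (i + 1) * ?c i * ?b (i + 1) = pi * (a i * (1 + (-1)^i) * (s^(i+1) / real (i+1)))"
      by simp
  qed simp
qed

lemma zero_int_imp:
  fixes h :: "real \<Rightarrow> real"
  assumes cont: "continuous_on {0..1} h" and z: "\<And>s. s \<in> {0..1} \<Longrightarrow> integral {0..s} h = 0"
  shows "h 1 = 0"
proof -
  have d1: "((\<lambda>u. integral {0..u} h) has_vector_derivative h 1) (at 1 within {0..1})"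
    by (rule integral_has_vector_derivative[OF cont]) simp
  have d2: "((\<lambda>u. integral {0..u} h) has_vector_derivative 0) (at 1 within {0..1})"
    by (rule has_vector_derivative_transform[where f="\<lambda>_. 0"]) (auto simp: z)
  show ?thesis
    using vector_derivative_unique_within_closed_interval[of 0 1 1 "\<lambda>u. integral {0..u} h"] d1 d2
    by simp
qed

lemma half_lemma: "(a::real) > 0 \<Longrightarrow> a * (x / (2 * a)) = x / 2"
  by (simp add: field_simps)

lemma absb:
  fixes X Y e :: real
  assumes "X = pi * Y" "\<bar>X\<bar> \<le> (e * (2*pi)) * (pi/2 - 0)"
  shows "\<bar>Y\<bar> \<le> pi * e"
proof -
  have "\<bar>X\<bar> = pi * \<bar>Y\<bar>" using assms(1) pi_gt_zero by (simp add: abs_mult)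
  moreover have h: "(e * (2*pi)) * (pi/2 - 0) = pi * (pi * e)" by simp
  ultimately have "pi * \<bar>Y\<bar> \<le> pi * (pi * e)" using assms(2) unfolding h by linarith
  then show ?thesis using pi_gt_zero by (metis mult_le_cancel_left_pos)
qed

lemma abel_int:
  fixes m :: "real \<Rightarrow> real"
  assumes cont: "continuous_on {-1..1} m"
    and T: "\<And>r. r \<in> {0..1} \<Longrightarrow> integral {0..2*pi} (\<lambda>t. m (r * cos t)) = 0"
    and s: "s \<in> {0..1}"
  shows "integral {0..s} (\<lambda>x. m x + m (-x)) = 0"
proof -
  have cm: "continuous_on {0..2*pi} (\<lambda>t. m (r * cos t))" if r: "r \<in> {0..1}" for r
  proof (rule continuous_on_compose2[OF cont])
    show "continuous_on {0..2*pi} (\<lambda>t. r * cos t)" by (intro continuous_intros)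
    show "(\<lambda>t. r * cos t) ` {0..2*pi} \<subseteq> {-1..1}"
    proof
      fix y assume "y \<in> (\<lambda>t. r * cos t) ` {0..2*pi}"
      then obtain t where y: "y = r * cos t" by auto
      have "\<bar>r * cos t\<bar> \<le> 1 * 1"
        unfolding abs_mult using r by (intro mult_mono) auto
      then show "y \<in> {-1..1}" using y by auto
    qed
  qed
  have cms: "continuous_on {0..s} (\<lambda>x. m x + m (-x))"
  proof -
    have "continuous_on {0..s} m" by (rule continuous_on_subset[OF cont]) (use s in auto)
    moreover have "continuous_on {0..s} (\<lambda>x. m (-x))"
      by (rule continuous_on_compose2[OF cont]) (use s in \<open>auto intro!: continuous_intros\<close>)
    ultimately show ?thesis by (intro continuous_intros)
  qed
  have bound: "\<bar>integral {0..s} (\<lambda>x. m x + m (-x))\<bar> \<le> (pi + 2) * e" if e: "e > 0" for e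
  proof -
    obtain g where pg: "polynomial_function g" and ap: "\<forall>x\<in>{-1..1}. norm (m x - g x) < e"
      using Stone_Weierstrass_polynomial_function[OF compact_Icc cont e] by blast
    then obtain a N where geq: "g = (\<lambda>x. \<Sum>i\<le>N. a i * x^i)"
      using real_polynomial_function_imp_sum real_polynomial_function_eq by metis
    have cg: "continuous_on A g" for A unfolding geq by (intro continuous_intros)
    have TG: "\<bar>integral {0..2*pi} (\<lambda>t. g (r * cos t))\<bar> \<le> e * (2*pi)" if r: "r \<in> {0..1}" for r
    proof -
      have ig: "(\<lambda>t. g (r * cos t)) integrable_on {0..2*pi}"
        unfolding geq by (intro integrable_continuous_real continuous_intros)
      have im: "(\<lambda>t. m (r * cos t)) integrable_on {0..2*pi}"
        by (rule integrable_continuous_real[OF cm[OF r]])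
      have "integral {0..2*pi} (\<lambda>t. g (r * cos t)) = integral {0..2*pi} (\<lambda>t. g (r * cos t) - m (r * cos t))"
        using integral_diff[OF ig im] T[OF r] by simp
      also have "norm \<dots> \<le> e * (2*pi - 0)"
      proof (rule integral_bound)
        show "continuous_on {0..2*pi} (\<lambda>t. g (r * cos t) - m (r * cos t))"
          using cm[OF r] unfolding geq by (intro continuous_intros)
        fix t assume "t \<in> {0..2*pi}"
        have "\<bar>r * cos t\<bar> \<le> 1 * 1"
          unfolding abs_mult using r by (intro mult_mono) auto
        then have "r * cos t \<in> {-1..1}" by auto
        then have "\<bar>m (r * cos t) - g (r * cos t)\<bar> < e" using ap by simp
        then show "norm (g (r * cos t) - m (r * cos t)) \<le> e"
          by (simp add: abs_minus_commute)
      qed simp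
      finally show ?thesis by simp
    qed
    have G: "\<bar>integral {0..pi/2} (\<lambda>p. s * sin p * integral {0..2*pi} (\<lambda>t. g (s * sin p * cos t)))\<bar> \<le> (e * (2*pi)) * (pi/2 - 0)"
      unfolding real_norm_def[symmetric]
    proof (rule integral_bound)
      show "continuous_on {0..pi/2} (\<lambda>p. s * sin p * integral {0..2*pi} (\<lambda>t. g (s * sin p * cos t)))"
        unfolding geq inner_poly by (intro continuous_intros)
      fix p assume p: "p \<in> {0..pi/2}"
      have sp: "0 \<le> sin p" "sin p \<le> 1" using p by (auto intro!: sin_ge_zero)
      have r: "s * sin p \<in> {0..1}" using s sp mult_mono[of s 1 "sin p" 1] by auto
      have "norm (s * sin p * integral {0..2*pi} (\<lambda>t. g (s * sin p * cos t)))
         = \<bar>s * sin p\<bar> * \<bar>integral {0..2*pi} (\<lambda>t. g (s * sin p * cos t))\<bar>"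
        by (simp add: abs_mult)
      also have "\<dots> \<le> 1 * (e * (2*pi))"
        using r TG[OF r] by (intro mult_mono) auto
      finally show "norm (s * sin p * integral {0..2*pi} (\<lambda>t. g (s * sin p * cos t))) \<le> e * (2*pi)" by simp
    qed simp
    have "integral {0..pi/2} (\<lambda>p. s * sin p * integral {0..2*pi} (\<lambda>t. g (s * sin p * cos t)))
       = pi * integral {0..s} (\<lambda>x. g x + g (-x))"
      unfolding geq by (rule G_poly) (use s in auto)
    from absb[OF this G] have G2: "\<bar>integral {0..s} (\<lambda>x. g x + g (-x))\<bar> \<le> pi * e" .
    have cgs: "continuous_on {0..s} (\<lambda>x. g x + g (-x))" unfolding geq by (intro continuous_intros)
    have "integral {0..s} (\<lambda>x. m x + m (-x)) - integral {0..s} (\<lambda>x. g x + g (-x))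
        = integral {0..s} (\<lambda>x. (m x + m (-x)) - (g x + g (-x)))"
      by (rule integral_diff[symmetric]) (intro integrable_continuous_real cms cgs)+
    also have "norm \<dots> \<le> (2*e) * (s - 0)"
    proof (rule integral_bound)
      show "continuous_on {0..s} (\<lambda>x. (m x + m (-x)) - (g x + g (-x)))"
        using continuous_on_diff[OF cms cgs] by simp
      fix x assume x: "x \<in> {0..s}"
      then have "x \<in> {-1..1}" "-x \<in> {-1..1}" using s by auto
      then have "\<bar>m x - g x\<bar> < e" "\<bar>m (-x) - g (-x)\<bar> < e" using ap by auto
      then show "norm ((m x + m (-x)) - (g x + g (-x))) \<le> 2 * e" by simp
    qed (use s in simp)
    finally have "\<bar>integral {0..s} (\<lambda>x. m x + m (-x)) - integral {0..s} (\<lambda>x. g x + g (-x))\<bar> \<le> 2 * e"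
      using s e by simp (smt (verit) mult_left_le)
    with G2 show ?thesis by (simp add: algebra_simps)
  qed
  show ?thesis
  proof (rule ccontr)
    let ?I = "integral {0..s} (\<lambda>x. m x + m (-x))"
    assume "?I \<noteq> 0"
    then have "\<bar>?I\<bar> / (2 * (pi + 2)) > 0" by (simp add: pi_gt_zero add_pos_pos)
    from bound[OF this] have b1: "\<bar>?I\<bar> \<le> (pi + 2) * (\<bar>?I\<bar> / (2 * (pi + 2)))" .
    have "(pi + 2) * (\<bar>?I\<bar> / (2 * (pi + 2))) = \<bar>?I\<bar> / 2"
      by (rule half_lemma) (use pi_gt_zero in linarith)
    with b1 have "\<bar>?I\<bar> \<le> \<bar>?I\<bar> / 2" by simp
    then show False using \<open>?I \<noteq> 0\<close> by simp
  qed
qed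

lemma abel:
  fixes m :: "real \<Rightarrow> real"
  assumes cont: "continuous_on {-1..1} m"
    and T: "\<And>r. r \<in> {0..1} \<Longrightarrow> integral {0..2*pi} (\<lambda>t. m (r * cos t)) = 0"
  shows "m 1 + m (-1) = 0"
proof -
  have "continuous_on {0..1} (\<lambda>x. m x + m (-x))"
  proof -
    have "continuous_on {0..1} m" by (rule continuous_on_subset[OF cont]) auto
    moreover have "continuous_on {0..1} (\<lambda>x. m (-x))"
      by (rule continuous_on_compose2[OF cont]) (auto intro!: continuous_intros)
    ultimately show ?thesis by (intro continuous_intros)
  qed
  from zero_int_imp[OF this abel_int[OF cont T]] show ?thesis by simp
qed

lemma lborel_limit:
  fixes f :: "real \<Rightarrow> real"
  assumes int: "integrable lborel f" and cf: "continuous_on UNIV f"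
  shows "(\<lambda>k. integral {-real k..real k} f) \<longlonglongrightarrow> integral\<^sup>L lborel f"
proof -
  let ?fk = "\<lambda>k x. if x \<in> {-real k..real k} then f x else 0"
  have hI: "(\<lambda>x. \<bar>f x\<bar>) integrable_on UNIV"
    using integrable_on_lborel[OF integrable_abs[OF int]] by simp
  have fk: "?fk k integrable_on UNIV" for k
    unfolding integrable_restrict_UNIV
    by (rule integrable_continuous_real) (rule continuous_on_subset[OF cf], simp)
  have conv: "(\<lambda>k. ?fk k x) \<longlonglongrightarrow> f x" for x
  proof (rule tendsto_eventually)
    show "\<forall>\<^sub>F k in sequentially. ?fk k x = f x"
      unfolding eventually_sequentially
    proof (intro exI allI impI)
      fix k assume "nat \<lceil>\<bar>x\<bar>\<rceil> \<le> k"
      then have "\<bar>x\<bar> \<le> real k" by linarith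
      then show "?fk k x = f x" by auto
    qed
  qed
  have "(\<lambda>k. integral UNIV (?fk k)) \<longlonglongrightarrow> integral UNIV f"
    by (rule dominated_convergence(2)[OF fk hI _ conv]) auto
  moreover have "integral UNIV (?fk k) = integral {-real k..real k} f" for k
    by (rule Henstock_Kurzweil_Integration.integral_restrict_UNIV)
  moreover have "integral UNIV f = integral\<^sup>L lborel f"
    by (rule integral_lborel[OF int])
  ultimately show ?thesis by simp
qed

lemma norm_frame2:
  fixes e u :: "'a::real_inner"
  assumes "norm e = 1" "norm u = 1" "e \<bullet> u = 0"
  shows "(norm (a *\<^sub>R e + b *\<^sub>R u))^2 = a^2 + b^2"
proof -
  have ee: "e \<bullet> e = 1" "u \<bullet> u = 1" using assms(1,2) norm_eq_1 by auto
  have ue: "u \<bullet> e = 0" using assms(3) by (simp add: inner_commute)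
  show ?thesis
    unfolding power2_norm_eq_inner
    by (simp add: inner_add_left inner_add_right ee ue assms(3) power2_eq_square)
qed

lemma half_circle0:
  fixes K :: "real^3 \<Rightarrow> real"
  assumes cont: "continuous_on (UNIV - {0}) K"
    and hom: "\<And>(c::real) x. c > 0 \<Longrightarrow> x \<noteq> 0 \<Longrightarrow> K (c *\<^sub>R x) = K x"
    and orth: "line_distance_orthogonal 1 K"
    and ne: "norm e = 1" and nu: "norm u = 1" and eu: "e \<bullet> u = 0"
  shows "integral {-(pi/2)..pi/2} (\<lambda>t. K (cos t *\<^sub>R e + sin t *\<^sub>R u)) = 0"
proof -
  define f where "f = (\<lambda>t. K (e + t *\<^sub>R u) / (1 + t^2))"
  have nrm: "norm (e + t *\<^sub>R u) = sqrt (1 + t^2)" for t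
    using norm_frame2[OF ne nu eu, of 1 t] by (simp add: real_sqrt_unique)
  have nz: "e + t *\<^sub>R u \<noteq> 0" for t
  proof
    assume "e + t *\<^sub>R u = 0"
    then have "norm (e + t *\<^sub>R u) = 0" by simp
    with nrm[of t] have "1 + t^2 = 0" by simp
    then show False using zero_le_power2[of t] by linarith
  qed
  have ntl: "e \<notin> affine_line 0 (-u)"
  proof
    assume "e \<in> affine_line 0 (-u)"
    then obtain t where "e = 0 + t *\<^sub>R (-u)" unfolding affine_line_def by auto
    then have "e \<bullet> u = - t * (u \<bullet> u)" by (simp add: inner_minus_left)
    moreover have "u \<bullet> u = 1" using nu norm_eq_1 by auto
    ultimately have "t = 0" using eu by simp
    then show False using \<open>e = 0 + t *\<^sub>R (-u)\<close> ne by simp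
  qed
  have F: "(\<lambda>t::real. K (e - (0 + t *\<^sub>R (-u))) * norm (e - (0 + t *\<^sub>R (-u))) powr (- 1 - 1)) = f"
  proof
    fix t :: real
    have "norm (e + t *\<^sub>R u) powr (- 1 - 1) = 1 / (1 + t^2)"
    proof -
      have pos: "norm (e + t *\<^sub>R u) > 0" using nz[of t] by simp
      have "norm (e + t *\<^sub>R u) powr (- 1 - 1) = 1 / norm (e + t *\<^sub>R u) powr 2"
        by (simp add: powr_minus_divide)
      also have "norm (e + t *\<^sub>R u) powr 2 = (norm (e + t *\<^sub>R u))^2"
        using pos by (simp add: powr_numeral)
      also have "\<dots> = 1 + t^2" using norm_frame2[OF ne nu eu, of 1 t] by simp
      finally show ?thesis .
    qed
    then show "K (e - (0 + t *\<^sub>R (-u))) * norm (e - (0 + t *\<^sub>R (-u))) powr (- 1 - 1) = f t"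
      by (simp add: f_def)
  qed
  have nmu: "norm (-u) = 1" using nu by simp
  from orth[unfolded line_distance_orthogonal_def, rule_format, OF nmu ntl]
  have "integrable lborel f" "integral\<^sup>L lborel f = 0"
    unfolding Let_def F by auto
  note fint = this
  have cK: "continuous_on UNIV (\<lambda>t. K (e + t *\<^sub>R u))"
    by (rule continuous_on_compose2[OF cont]) (auto intro!: continuous_intros simp: nz)
  have pos1: "1 + t^2 > (0::real)" for t by (intro add_pos_nonneg) auto
  have cf: "continuous_on UNIV f"
    unfolding f_def
    by (intro continuous_intros cK) (intro ballI, metis pos1 less_irrefl)
  have lim1: "(\<lambda>k. integral {-real k..real k} f) \<longlonglongrightarrow> 0"
    using lborel_limit[OF fint(1) cf] fint(2) by simp
  define G where "G = (\<lambda>t. K (cos t *\<^sub>R e + sin t *\<^sub>R u))"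
  have Gnz: "cos t *\<^sub>R e + sin t *\<^sub>R u \<noteq> 0" for t
  proof
    assume "cos t *\<^sub>R e + sin t *\<^sub>R u = 0"
    then have "(norm (cos t *\<^sub>R e + sin t *\<^sub>R u))^2 = 0" by simp
    then show False using norm_frame2[OF ne nu eu, of "cos t" "sin t"] by simp
  qed
  have cG: "continuous_on UNIV G"
    unfolding G_def
    by (rule continuous_on_compose2[OF cont]) (auto intro!: continuous_intros simp: Gnz)
  have sub: "integral {-arctan (real k)..arctan (real k)} G = integral {-real k..real k} f" for k
  proof -
    let ?a = "arctan (real k)"
    have a0: "0 \<le> ?a" by simp
    have apos: "?a < pi/2" using arctan_ubound by blast
    have cospos: "cos x > 0" if "x \<in> {-?a..?a}" for x
      using that apos by (intro cos_gt_zero_pi) auto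
    have hsub: "((\<lambda>x. inverse ((cos x)^2) *\<^sub>R f (tan x)) has_integral integral {tan (-?a)..tan ?a} f) {-?a..?a}"
    proof (rule has_integral_substitution[where c="-real k" and d="real k"])
      show "-?a \<le> ?a" using a0 by simp
      show "tan (-?a) \<le> tan ?a" by (simp add: tan_minus tan_arctan)
      show "tan ` {-?a..?a} \<subseteq> {-real k..real k}"
      proof
        fix y assume "y \<in> tan ` {-?a..?a}"
        then obtain x where x: "x \<in> {-?a..?a}" "y = tan x" by auto
        have "-(pi/2) < x" "x < pi/2" using x apos by auto
        then have "arctan (tan x) = x" by (rule arctan_tan)
        then have "arctan (-real k) \<le> arctan (tan x)" "arctan (tan x) \<le> arctan (real k)"
          using x by (auto simp: arctan_minus)
        then show "y \<in> {-real k..real k}" unfolding arctan_le_iff using x by auto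
      qed
      show "continuous_on {-real k..real k} f" by (rule continuous_on_subset[OF cf]) simp
      fix x assume "x \<in> {-?a..?a}"
      then have "cos x \<noteq> 0" using cospos by force
      then show "(tan has_real_derivative inverse ((cos x)^2)) (at x within {-?a..?a})"
        by (rule DERIV_tan[THEN has_field_derivative_at_within])
    qed
    have heq: "inverse ((cos x)^2) *\<^sub>R f (tan x) = G x" if "x \<in> {-?a..?a}" for x
    proof -
      have c: "cos x > 0" using cospos[OF that] .
      have t1: "1 + (tan x)^2 = inverse ((cos x)^2)"
        using c tan_sec[of x] by (simp add: power_inverse)
      have "inverse ((cos x)^2) *\<^sub>R f (tan x) = inverse ((cos x)^2) * (K (e + tan x *\<^sub>R u) / inverse ((cos x)^2))"
        unfolding f_def t1 by simp
      also have "\<dots> = K (e + tan x *\<^sub>R u)" using c by simp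
      finally have "inverse ((cos x)^2) *\<^sub>R f (tan x) = K (e + tan x *\<^sub>R u)" .
      also have "\<dots> = K (cos x *\<^sub>R (e + tan x *\<^sub>R u))"
        by (rule hom[OF c nz, symmetric])
      also have "cos x *\<^sub>R (e + tan x *\<^sub>R u) = cos x *\<^sub>R e + sin x *\<^sub>R u"
        using c by (simp add: tan_def scaleR_add_right)
      finally show ?thesis unfolding G_def .
    qed
    have "(G has_integral integral {tan (-?a)..tan ?a} f) {-?a..?a}"
      by (rule has_integral_eq[OF heq hsub])
    then show ?thesis by (simp add: integral_unique tan_minus tan_arctan)
  qed
  define Fi where "Fi = (\<lambda>x. integral {-(pi/2)..x} G)"
  have cFi: "continuous_on {-(pi/2)..pi/2} Fi"
    unfolding Fi_def
    by (rule indefinite_integral_continuous_1) (rule integrable_continuous_real[OF continuous_on_subset[OF cG]], simp)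
  have split: "integral {-A..A} G = Fi A - Fi (-A)" if "A \<in> {0..pi/2}" for A
  proof -
    have "integral {-(pi/2)..-A} G + integral {-A..A} G = integral {-(pi/2)..A} G"
    proof (rule Henstock_Kurzweil_Integration.integral_combine)
      show "G integrable_on {-(pi/2)..A}"
        by (rule integrable_continuous_real[OF continuous_on_subset[OF cG]]) simp
    qed (use that in auto)
    then show ?thesis unfolding Fi_def by simp
  qed
  have at: "(\<lambda>k. arctan (real k)) \<longlonglongrightarrow> pi/2"
    using filterlim_compose[OF tendsto_arctan_at_top filterlim_real_sequentially] by (simp add: o_def)
  have at': "(\<lambda>k. - arctan (real k)) \<longlonglongrightarrow> -(pi/2)"
    using tendsto_minus[OF at] .
  have inS: "arctan (real k) \<in> {-(pi/2)..pi/2}" "- arctan (real k) \<in> {-(pi/2)..pi/2}" for k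
    using arctan_ubound[of "real k"] arctan_lbound[of "real k"] by auto
  have l1: "(\<lambda>k. Fi (arctan (real k))) \<longlonglongrightarrow> Fi (pi/2)"
    by (rule continuous_on_tendsto_compose[OF cFi at]) (use inS in \<open>auto simp: pi_ge_zero\<close>)
  have l2: "(\<lambda>k. Fi (- arctan (real k))) \<longlonglongrightarrow> Fi (-(pi/2))"
    by (rule continuous_on_tendsto_compose[OF cFi at']) (use inS in \<open>auto simp: pi_ge_zero\<close>)
  have "(\<lambda>k. integral {-real k..real k} f) \<longlonglongrightarrow> Fi (pi/2) - Fi (-(pi/2))"
  proof -
    have "integral {-real k..real k} f = Fi (arctan (real k)) - Fi (- arctan (real k))" for k
      using sub[of k] split[of "arctan (real k)"] arctan_ubound[of "real k"] by (simp add: less_imp_le)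
    then show ?thesis using tendsto_diff[OF l1 l2] by simp
  qed
  with lim1 have "Fi (pi/2) - Fi (-(pi/2)) = 0" using LIMSEQ_unique by blast
  then show ?thesis using split[of "pi/2"] unfolding G_def by (simp add: pi_ge_zero)
qed

lemma frame_rot:
  fixes e u :: "real^3"
  assumes ne: "norm e = 1" and nu: "norm u = 1" and eu: "e \<bullet> u = 0"
  shows "norm (cos d *\<^sub>R e + sin d *\<^sub>R u) = 1" "norm ((- sin d) *\<^sub>R e + cos d *\<^sub>R u) = 1"
    "(cos d *\<^sub>R e + sin d *\<^sub>R u) \<bullet> ((- sin d) *\<^sub>R e + cos d *\<^sub>R u) = 0"
proof -
  have "(norm (cos d *\<^sub>R e + sin d *\<^sub>R u))^2 = 1" using norm_frame2[OF ne nu eu] by simp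
  then show "norm (cos d *\<^sub>R e + sin d *\<^sub>R u) = 1" by (smt (verit) norm_ge_zero power2_eq_1_iff)
  have "(norm ((- sin d) *\<^sub>R e + cos d *\<^sub>R u))^2 = (- sin d)^2 + (cos d)^2" by (rule norm_frame2[OF ne nu eu])
  then have "(norm ((- sin d) *\<^sub>R e + cos d *\<^sub>R u))^2 = 1" by simp
  then show "norm ((- sin d) *\<^sub>R e + cos d *\<^sub>R u) = 1" by (smt (verit) norm_ge_zero power2_eq_1_iff)
  have ee: "e \<bullet> e = 1" "u \<bullet> u = 1" using ne nu norm_eq_1 by auto
  have ue: "u \<bullet> e = 0" using eu by (simp add: inner_commute)
  show "(cos d *\<^sub>R e + sin d *\<^sub>R u) \<bullet> ((- sin d) *\<^sub>R e + cos d *\<^sub>R u) = 0"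
    by (simp add: inner_add_left inner_add_right ee ue eu algebra_simps)
qed

lemma half_circle:
  fixes K :: "real^3 \<Rightarrow> real"
  assumes cont: "continuous_on (UNIV - {0}) K"
    and hom: "\<And>(c::real) x. c > 0 \<Longrightarrow> x \<noteq> 0 \<Longrightarrow> K (c *\<^sub>R x) = K x"
    and orth: "line_distance_orthogonal 1 K"
    and ne: "norm e = 1" and nu: "norm u = 1" and eu: "e \<bullet> u = 0"
  shows "integral {d - pi/2..d + pi/2} (\<lambda>t. K (cos t *\<^sub>R e + sin t *\<^sub>R u)) = 0"
proof -
  define G where "G = (\<lambda>t. K (cos t *\<^sub>R e + sin t *\<^sub>R u))"
  have Gnz: "cos t *\<^sub>R e + sin t *\<^sub>R u \<noteq> 0" for t
    using frame_rot(1)[OF ne nu eu, of t] by auto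
  have cG: "continuous_on UNIV G"
    unfolding G_def
    by (rule continuous_on_compose2[OF cont]) (auto intro!: continuous_intros simp: Gnz)
  note h0 = half_circle0[OF cont hom orth frame_rot[OF ne nu eu, of d]]
  have eq: "cos t *\<^sub>R (cos d *\<^sub>R e + sin d *\<^sub>R u) + sin t *\<^sub>R ((- sin d) *\<^sub>R e + cos d *\<^sub>R u)
      = cos (t + d) *\<^sub>R e + sin (t + d) *\<^sub>R u" for t
    by (simp add: cos_add sin_add algebra_simps scaleR_add_right)
  have "integral {-(pi/2)..pi/2} (G \<circ> (\<lambda>t. t + d)) = integral {-(pi/2) + d..pi/2 + d} G"
    by (rule integral_shift) (rule continuous_on_subset[OF cG], simp)
  moreover have "G \<circ> (\<lambda>t. t + d) = (\<lambda>t. K (cos t *\<^sub>R (cos d *\<^sub>R e + sin d *\<^sub>R u) + sin t *\<^sub>R ((- sin d) *\<^sub>R e + cos d *\<^sub>R u)))"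
    unfolding G_def o_def eq ..
  ultimately have "integral {-(pi/2) + d..pi/2 + d} G = 0" using h0 by simp
  then show ?thesis unfolding G_def by (simp add: algebra_simps)
qed

lemma K_even_unit:
  fixes K :: "real^3 \<Rightarrow> real"
  assumes cont: "continuous_on (UNIV - {0}) K"
    and hom: "\<And>(c::real) x. c > 0 \<Longrightarrow> x \<noteq> 0 \<Longrightarrow> K (c *\<^sub>R x) = K x"
    and orth: "line_distance_orthogonal 1 K"
    and ne: "norm e = 1" and nu: "norm u = 1" and eu: "e \<bullet> u = 0"
  shows "K (-u) = K u"
proof -
  define G where "G = (\<lambda>t. K (cos t *\<^sub>R e + sin t *\<^sub>R u))"
  have Gnz: "cos t *\<^sub>R e + sin t *\<^sub>R u \<noteq> 0" for t
    using frame_rot(1)[OF ne nu eu, of t] by auto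
  have cG: "continuous_on UNIV G"
    unfolding G_def
    by (rule continuous_on_compose2[OF cont]) (auto intro!: continuous_intros simp: Gnz)
  define Fi where "Fi = (\<lambda>x. integral {-pi..x} G)"
  have dF: "(Fi has_field_derivative G x) (at x)" if "x \<in> {-pi<..<pi}" for x
  proof -
    have "(Fi has_field_derivative G x) (at x within {-pi..pi})"
      unfolding Fi_def
      by (rule integral_has_real_derivative) (use that continuous_on_subset[OF cG] in auto)
    moreover have "at x within {-pi..pi} = at x"
      by (rule at_within_interior) (use that in simp)
    ultimately show ?thesis by simp
  qed
  have H0: "Fi (x + pi/2) - Fi (x + -(pi/2)) = 0" if "x \<in> {-(pi/2)<..<pi/2}" for x
  proof -
    have "integral {-pi..x + -(pi/2)} G + integral {x + -(pi/2)..x + pi/2} G = integral {-pi..x + pi/2} G"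
    proof (rule Henstock_Kurzweil_Integration.integral_combine)
      show "G integrable_on {-pi..x + pi/2}"
        by (rule integrable_continuous_real[OF continuous_on_subset[OF cG]]) simp
    qed (use that in auto)
    moreover have "integral {x - pi/2..x + pi/2} G = 0"
      unfolding G_def by (rule half_circle[OF cont hom orth ne nu eu])
    ultimately show ?thesis unfolding Fi_def by simp
  qed
  have p1: "-(pi/2) < pi" "-pi < -(pi/2)" "-pi < pi/2" "pi/2 < pi" using pi_gt_zero by linarith+
  have mem1: "0 + pi/2 \<in> {-pi<..<pi}" using p1(3,4) by simp
  have mem2: "0 + -(pi/2) \<in> {-pi<..<pi}" unfolding greaterThanLessThan_iff add_0_left using p1(2,1) by (rule conjI)
  have d1: "((\<lambda>x. Fi (x + pi/2)) has_field_derivative G (0 + pi/2)) (at 0)"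
    by (rule DERIV_shift[THEN iffD1], rule dF, rule mem1)
  have d2: "((\<lambda>x. Fi (x + -(pi/2))) has_field_derivative G (0 + -(pi/2))) (at 0)"
    by (rule DERIV_shift[THEN iffD1], rule dF, rule mem2)
  have d3: "((\<lambda>x. Fi (x + pi/2) - Fi (x + -(pi/2))) has_field_derivative G (0 + pi/2) - G (0 + -(pi/2))) (at 0)"
    by (rule DERIV_diff[OF d1 d2])
  have d4: "((\<lambda>x. 0) has_field_derivative G (0 + pi/2) - G (0 + -(pi/2))) (at 0)"
  proof (rule has_field_derivative_transform_within_open[OF d3, of "{-(pi/2)<..<pi/2}"])
    show "open {-(pi/2)<..<pi/2}" by simp
    have "-(pi/2) < 0" "0 < pi/2" using pi_gt_zero by linarith+
    then show "0 \<in> {-(pi/2)<..<pi/2}" unfolding greaterThanLessThan_iff by (rule conjI)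
    fix x assume "x \<in> {-(pi/2)<..<pi/2}"
    then show "Fi (x + pi/2) - Fi (x + -(pi/2)) = 0" by (rule H0)
  qed
  have "G (0 + pi/2) - G (0 + -(pi/2)) = 0"
    using DERIV_unique[OF d4 DERIV_const] .
  then show ?thesis unfolding G_def by simp
qed

lemma full_circle:
  fixes K :: "real^3 \<Rightarrow> real"
  assumes cont: "continuous_on (UNIV - {0}) K"
    and hom: "\<And>(c::real) x. c > 0 \<Longrightarrow> x \<noteq> 0 \<Longrightarrow> K (c *\<^sub>R x) = K x"
    and orth: "line_distance_orthogonal 1 K"
    and ne: "norm e = 1" and nu: "norm u = 1" and eu: "e \<bullet> u = 0"
  shows "integral {0..2*pi} (\<lambda>t. K (cos t *\<^sub>R e + sin t *\<^sub>R u)) = 0"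
proof -
  define G where "G = (\<lambda>t. K (cos t *\<^sub>R e + sin t *\<^sub>R u))"
  have Gnz: "cos t *\<^sub>R e + sin t *\<^sub>R u \<noteq> 0" for t
    using frame_rot(1)[OF ne nu eu, of t] by auto
  have cG: "continuous_on UNIV G"
    unfolding G_def
    by (rule continuous_on_compose2[OF cont]) (auto intro!: continuous_intros simp: Gnz)
  have "integral {0..pi} G + integral {pi..2*pi} G = integral {0..2*pi} G"
  proof (rule Henstock_Kurzweil_Integration.integral_combine)
    show "G integrable_on {0..2*pi}"
      by (rule integrable_continuous_real[OF continuous_on_subset[OF cG]]) simp
  qed (use pi_gt_zero in auto)
  moreover have "integral {pi/2 - pi/2..pi/2 + pi/2} G = 0"
    unfolding G_def by (rule half_circle[OF cont hom orth ne nu eu])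
  moreover have "integral {3*pi/2 - pi/2..3*pi/2 + pi/2} G = 0"
    unfolding G_def by (rule half_circle[OF cont hom orth ne nu eu])
  moreover have "pi/2 - pi/2 = 0" "pi/2 + pi/2 = pi" "3*pi/2 - pi/2 = pi" "3*pi/2 + pi/2 = 2*pi"
    by simp_all
  ultimately show ?thesis unfolding G_def by simp
qed

lemma periodic_shift:
  fixes h :: "real \<Rightarrow> real"
  assumes ch: "continuous_on UNIV h" and per: "\<And>x. h (x + 2*pi) = h x"
    and b: "b \<in> {0..2*pi}"
  shows "integral {0..2*pi} (\<lambda>a. h (a + b)) = integral {0..2*pi} h"
proof -
  have int: "h integrable_on {x..y}" for x y
    by (rule integrable_continuous_real[OF continuous_on_subset[OF ch]]) simp
  have c1: "integral {b..2*pi} h + integral {2*pi..2*pi + b} h = integral {b..2*pi + b} h"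
    by (rule Henstock_Kurzweil_Integration.integral_combine) (use b int in auto)
  have "integral {0..2*pi} (\<lambda>a. h (a + b)) = integral {0 + b..2*pi + b} h"
    using integral_shift[OF continuous_on_subset[OF ch], of 0 b "2*pi"] by (simp add: o_def)
  also have "\<dots> = integral {b..2*pi} h + integral {2*pi..2*pi + b} h"
    using c1 by simp
  also have "integral {2*pi..2*pi + b} h = integral {0..b} h"
  proof -
    have "integral {0..b} (h \<circ> (\<lambda>x. x + 2*pi)) = integral {0 + 2*pi..b + 2*pi} h"
      by (rule integral_shift[OF continuous_on_subset[OF ch]]) simp
    moreover have "h \<circ> (\<lambda>x. x + 2*pi) = h" using per by (simp add: o_def)
    ultimately show ?thesis by (simp add: add.commute)
  qed
  also have "integral {b..2*pi} h + integral {0..b} h = integral {0..2*pi} h"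
    using Henstock_Kurzweil_Integration.integral_combine[of 0 b "2*pi" h] b int by simp
  finally show ?thesis .
qed

lemma frame_exists:
  fixes n :: "real^3"
  assumes nn: "norm n = 1"
  obtains f g where "norm f = 1" "norm g = 1" "n \<bullet> f = 0" "n \<bullet> g = 0" "f \<bullet> g = 0"
proof -
  have "n \<noteq> 0" using nn by auto
  then obtain S where S: "n \<in> S" "0 \<notin> S" "pairwise orthogonal S" "finite S" "card S = DIM(real^3)"
    using vector_in_orthogonal_basis by metis
  have "card S = 3" using S(5) by simp
  have "S - {n} \<noteq> {}"
  proof
    assume "S - {n} = {}"
    then have "S \<subseteq> {n}" by auto
    then have "card S \<le> card {n}" by (rule card_mono[rotated]) simp
    then show False using \<open>card S = 3\<close> by simp
  qed
  then obtain b where b: "b \<in> S" "b \<noteq> n" by auto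
  have b0: "b \<noteq> 0" using b S(2) by auto
  have nb: "n \<bullet> b = 0" using S(3) b S(1) unfolding pairwise_def orthogonal_def by auto
  define f where "f = (1 / norm b) *\<^sub>R b"
  have nf: "norm f = 1" unfolding f_def using b0 by simp
  have nf0: "n \<bullet> f = 0" unfolding f_def using nb by simp
  define g where "g = cross3 n f"
  have "(norm g)^2 + (n \<bullet> f)^2 = (norm n * norm f)^2" unfolding g_def by (rule norm_cross_dot)
  then have "(norm g)^2 = 1" using nn nf nf0 by simp
  then have ng: "norm g = 1" by (smt (verit) norm_ge_zero power2_eq_1_iff)
  have "n \<bullet> g = 0" "f \<bullet> g = 0" unfolding g_def by (simp_all add: dot_cross_self)
  then show ?thesis using that nf ng nf0 by blast
qed

definition latmean :: "(real^3 \<Rightarrow> real) \<Rightarrow> real^3 \<Rightarrow> real^3 \<Rightarrow> real^3 \<Rightarrow> real \<Rightarrow> real" where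
  "latmean K n f g z = integral {0..2*pi} (\<lambda>a. K (z *\<^sub>R n + sqrt (1 - z^2) *\<^sub>R (cos a *\<^sub>R f + sin a *\<^sub>R g)))"

lemma P_inner:
  fixes n f g :: "real^3"
  assumes nn: "norm n = 1" and nf: "norm f = 1" and ng: "norm g = 1"
    and o1: "n \<bullet> f = 0" and o2: "n \<bullet> g = 0" and o3: "f \<bullet> g = 0"
  shows "(a *\<^sub>R n + b *\<^sub>R f + c *\<^sub>R g) \<bullet> (a' *\<^sub>R n + b' *\<^sub>R f + c' *\<^sub>R g) = a*a' + b*b' + c*c'"
proof -
  have ee: "n \<bullet> n = 1" "f \<bullet> f = 1" "g \<bullet> g = 1" using nn nf ng norm_eq_1 by auto
  have o': "f \<bullet> n = 0" "g \<bullet> n = 0" "g \<bullet> f = 0" using o1 o2 o3 by (simp_all add: inner_commute)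
  show ?thesis by (simp add: inner_add_left inner_add_right ee o1 o2 o3 o')
qed

lemma P_norm:
  fixes n f g :: "real^3"
  assumes nn: "norm n = 1" and nf: "norm f = 1" and ng: "norm g = 1"
    and o1: "n \<bullet> f = 0" and o2: "n \<bullet> g = 0" and o3: "f \<bullet> g = 0"
  shows "(norm (a *\<^sub>R n + b *\<^sub>R f + c *\<^sub>R g))^2 = a^2 + b^2 + c^2"
  unfolding power2_norm_eq_inner P_inner[OF assms] by (simp add: power2_eq_square)

lemma P_nz:
  fixes n f g :: "real^3"
  assumes nn: "norm n = 1" and nf: "norm f = 1" and ng: "norm g = 1"
    and o1: "n \<bullet> f = 0" and o2: "n \<bullet> g = 0" and o3: "f \<bullet> g = 0"
    and "a^2 + b^2 + c^2 = 1"
  shows "a *\<^sub>R n + b *\<^sub>R f + c *\<^sub>R g \<noteq> 0"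
proof
  assume "a *\<^sub>R n + b *\<^sub>R f + c *\<^sub>R g = 0"
  then have "(norm (a *\<^sub>R n + b *\<^sub>R f + c *\<^sub>R g))^2 = 0" by simp
  then show False using P_norm[OF nn nf ng o1 o2 o3, of a b c] assms(7) by simp
qed

lemma P_unit:
  fixes n f g :: "real^3"
  assumes nn: "norm n = 1" and nf: "norm f = 1" and ng: "norm g = 1"
    and o1: "n \<bullet> f = 0" and o2: "n \<bullet> g = 0" and o3: "f \<bullet> g = 0"
    and "a^2 + b^2 + c^2 = 1"
  shows "norm (a *\<^sub>R n + b *\<^sub>R f + c *\<^sub>R g) = 1"
proof -
  have "(norm (a *\<^sub>R n + b *\<^sub>R f + c *\<^sub>R g))^2 = 1" using P_norm[OF nn nf ng o1 o2 o3, of a b c] assms(7) by simp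
  then show ?thesis by (smt (verit) norm_ge_zero power2_eq_1_iff)
qed

lemma beta_exists:
  fixes X Y rho :: real
  assumes "X^2 + Y^2 = rho^2" "rho \<ge> 0"
  obtains b where "b \<in> {0..2*pi}" "X = rho * cos b" "Y = rho * sin b"
proof (cases "rho = 0")
  case True
  then have "X = 0" "Y = 0" using assms(1) by (smt (verit) sum_power2_eq_zero_iff)+
  then show ?thesis using that[of 0] True by simp
next
  case False
  then have "(X/rho)^2 + (Y/rho)^2 = 1" using assms(1) by (simp add: power_divide add_divide_distrib[symmetric])
  then obtain b where "0 \<le> b" "b < 2*pi" "X/rho = cos b" "Y/rho = sin b" by (rule sincos_total_2pi)
  then show ?thesis using that[of b] False by (simp add: field_simps)
qed

lemma sq_id1: fixes s c p q u w :: real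
  shows "(-(s * p))^2 + (c * p * u - q * w)^2 + (c * p * w + q * u)^2
     = s^2 * p^2 + c^2 * p^2 * (u^2 + w^2) + q^2 * (u^2 + w^2)"
  by algebra
lemma sq_id2: fixes s c u v :: real
  shows "(- s)^2 + (c * u)^2 + (c * v)^2 = s^2 + c^2 * (u^2 + v^2)"
  by algebra

lemma sq_id3: fixes w r u v :: real
  shows "w^2 + (r * u)^2 + (r * v)^2 = w^2 + r^2 * (u^2 + v^2)"
  by algebra

lemma gen_id: fixes C S c2 s2 :: real
  shows "C + S = 1 \<Longrightarrow> c2 = 1 - s2 \<Longrightarrow> c2 * C + S = 1 - s2 * C"
  by algebra

lemma funk_step:
  fixes K :: "real^3 \<Rightarrow> real"
  assumes cont: "continuous_on (UNIV - {0}) K"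
    and hom: "\<And>(c::real) x. c > 0 \<Longrightarrow> x \<noteq> 0 \<Longrightarrow> K (c *\<^sub>R x) = K x"
    and orth: "line_distance_orthogonal 1 K"
    and nn: "norm n = 1" and nf: "norm f = 1" and ng: "norm g = 1"
    and o1: "n \<bullet> f = 0" and o2: "n \<bullet> g = 0" and o3: "f \<bullet> g = 0"
    and s: "s \<in> {0..1}"
  shows "integral {0..2*pi} (\<lambda>t. latmean K n f g (- (s * cos t))) = 0"
proof -
  note fr = nn nf ng o1 o2 o3
  define c where "c = sqrt (1 - s^2)"
  have s2: "s^2 \<le> 1" using s by (intro power_le_one) auto
  have c2: "c^2 = 1 - s^2" unfolding c_def using s2 by simp
  have c0: "c \<ge> 0" unfolding c_def using s2 by simp
  define \<Phi> where "\<Phi> = (\<lambda>a t. K ((- (s * cos t)) *\<^sub>R n + (c * cos t * cos a - sin t * sin a) *\<^sub>R f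
                          + (c * cos t * sin a + sin t * cos a) *\<^sub>R g))"
  have sq1: "(- (s * cos t))^2 + (c * cos t * cos a - sin t * sin a)^2 + (c * cos t * sin a + sin t * cos a)^2 = 1" for a t
  proof -
    have "(- (s * cos t))^2 + (c * cos t * cos a - sin t * sin a)^2 + (c * cos t * sin a + sin t * cos a)^2
        = s^2 * (cos t)^2 + c^2 * (cos t)^2 * ((cos a)^2 + (sin a)^2) + (sin t)^2 * ((cos a)^2 + (sin a)^2)"
      by (rule sq_id1)
    also have "\<dots> = (s^2 + c^2) * (cos t)^2 + (sin t)^2" by (simp add: algebra_simps)
    also have "\<dots> = 1" using c2 by simp
    finally show ?thesis .
  qed
  have inner0: "integral {0..2*pi} (\<lambda>t. \<Phi> a t) = 0" for a
  proof -
    define e1 where "e1 = (- s) *\<^sub>R n + (c * cos a) *\<^sub>R f + (c * sin a) *\<^sub>R g"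
    define e2 where "e2 = 0 *\<^sub>R n + (- sin a) *\<^sub>R f + cos a *\<^sub>R g"
    have ne1: "norm e1 = 1" unfolding e1_def
    proof (rule P_unit[OF fr])
      have "(- s)^2 + (c * cos a)^2 + (c * sin a)^2 = s^2 + c^2 * ((cos a)^2 + (sin a)^2)"
        by (rule sq_id2)
      then show "(- s)^2 + (c * cos a)^2 + (c * sin a)^2 = 1" using c2 by simp
    qed
    have ne2: "norm e2 = 1" unfolding e2_def by (rule P_unit[OF fr]) simp
    have e12: "e1 \<bullet> e2 = 0" unfolding e1_def e2_def P_inner[OF fr] by (simp add: algebra_simps)
    have "integral {0..2*pi} (\<lambda>t. K (cos t *\<^sub>R e1 + sin t *\<^sub>R e2)) = 0"
      by (rule full_circle[OF cont hom orth ne1 ne2 e12])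
    moreover have "cos t *\<^sub>R e1 + sin t *\<^sub>R e2 = (- (s * cos t)) *\<^sub>R n + (c * cos t * cos a - sin t * sin a) *\<^sub>R f
                          + (c * cos t * sin a + sin t * cos a) *\<^sub>R g" for t
      unfolding e1_def e2_def by (simp add: algebra_simps)
    ultimately show ?thesis unfolding \<Phi>_def by simp
  qed
  have cPhi: "continuous_on (cbox (0,0) (2*pi,2*pi)) (\<lambda>(a,t). \<Phi> a t)"
  proof -
    let ?Q = "\<lambda>x::real\<times>real. (- (s * cos (snd x))) *\<^sub>R n + (c * cos (snd x) * cos (fst x) - sin (snd x) * sin (fst x)) *\<^sub>R f
                          + (c * cos (snd x) * sin (fst x) + sin (snd x) * cos (fst x)) *\<^sub>R g"
    have cQ: "continuous_on UNIV ?Q" by (intro continuous_intros)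
    have nzQ: "?Q ` UNIV \<subseteq> UNIV - {0}"
    proof (rule image_subsetI)
      fix x :: "real \<times> real"
      show "?Q x \<in> UNIV - {0}" using P_nz[OF fr sq1[of "snd x" "fst x"]] by simp
    qed
    have "continuous_on UNIV (\<lambda>x. K (?Q x))" by (rule continuous_on_compose2[OF cont cQ nzQ])
    then show ?thesis unfolding \<Phi>_def case_prod_beta by (rule continuous_on_subset) simp
  qed
  have "integral {0..2*pi} (\<lambda>a. integral {0..2*pi} (\<lambda>t. \<Phi> a t))
      = integral {0..2*pi} (\<lambda>t. integral {0..2*pi} (\<lambda>a. \<Phi> a t))"
    using integral_swap_continuous[OF cPhi] by (simp add: cbox_interval)
  then have swap: "integral {0..2*pi} (\<lambda>t. integral {0..2*pi} (\<lambda>a. \<Phi> a t)) = 0"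
    using inner0 by simp
  have per_t: "integral {0..2*pi} (\<lambda>a. \<Phi> a t) = latmean K n f g (- (s * cos t))" for t
  proof -
    define w where "w = - (s * cos t)"
    define \<rho> where "\<rho> = sqrt (1 - w^2)"
    have w2: "w^2 \<le> 1"
    proof -
      have "\<bar>w\<bar> \<le> 1 * 1" unfolding w_def abs_minus_cancel abs_mult using s
        by (intro mult_mono) auto
      then show ?thesis by (simp add: abs_square_le_1)
    qed
    have rho2: "\<rho>^2 = 1 - w^2" unfolding \<rho>_def using w2 by simp
    have "(c * cos t)^2 + (sin t)^2 = \<rho>^2"
    proof -
      have "(c * cos t)^2 + (sin t)^2 = c^2 * (cos t)^2 + (sin t)^2" by (simp add: power_mult_distrib)
      also have "\<dots> = 1 - s^2 * (cos t)^2" by (rule gen_id[OF sin_cos_squared_add2[of t] c2])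
      finally show ?thesis unfolding rho2 w_def by (simp add: power_mult_distrib)
    qed
    moreover have rho0: "\<rho> \<ge> 0" unfolding \<rho>_def using w2 by simp
    ultimately obtain b where b: "b \<in> {0..2*pi}" "c * cos t = \<rho> * cos b" "sin t = \<rho> * sin b"
      by (rule beta_exists)
    define h where "h = (\<lambda>a. K (w *\<^sub>R n + (\<rho> * cos a) *\<^sub>R f + (\<rho> * sin a) *\<^sub>R g))"
    have hsq: "w^2 + (\<rho> * cos a)^2 + (\<rho> * sin a)^2 = 1" for a
    proof -
      have "w^2 + (\<rho> * cos a)^2 + (\<rho> * sin a)^2 = w^2 + \<rho>^2 * ((cos a)^2 + (sin a)^2)"
        by (rule sq_id3)
      then show ?thesis using rho2 by simp
    qed
    have ch: "continuous_on UNIV h"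
      unfolding h_def
      by (rule continuous_on_compose2[OF cont]) (auto intro!: continuous_intros simp: P_nz[OF fr hsq])
    have per: "h (x + 2*pi) = h x" for x unfolding h_def by simp
    have "\<Phi> a t = h (a + b)" for a
    proof -
      have "c * cos t * cos a - sin t * sin a = \<rho> * cos (a + b)"
        unfolding b(2,3) cos_add by (simp add: algebra_simps)
      moreover have "c * cos t * sin a + sin t * cos a = \<rho> * sin (a + b)"
        unfolding b(2,3) sin_add by (simp add: algebra_simps)
      ultimately show ?thesis unfolding \<Phi>_def h_def w_def by simp
    qed
    then have "integral {0..2*pi} (\<lambda>a. \<Phi> a t) = integral {0..2*pi} h"
      using periodic_shift[OF ch per b(1)] by simp
    also have "\<dots> = latmean K n f g w"
      unfolding latmean_def h_def \<rho>_def by (simp add: scaleR_add_right add.assoc)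
    finally show ?thesis unfolding w_def .
  qed
  show ?thesis using swap per_t by simp
qed

lemma K_unit_zero:
  fixes K :: "real^3 \<Rightarrow> real"
  assumes cont: "continuous_on (UNIV - {0}) K"
    and hom: "\<And>(c::real) x. c > 0 \<Longrightarrow> x \<noteq> 0 \<Longrightarrow> K (c *\<^sub>R x) = K x"
    and orth: "line_distance_orthogonal 1 K"
    and nn: "norm n = 1"
  shows "K n = 0"
proof -
  obtain f g where nf: "norm f = 1" and ng: "norm g = 1" and o1: "n \<bullet> f = 0" and o2: "n \<bullet> g = 0"
    and o3: "f \<bullet> g = 0"
    using frame_exists[OF nn] by blast
  note fr = nn nf ng o1 o2 o3
  let ?Q = "\<lambda>x::real\<times>real. fst x *\<^sub>R n + (sqrt (1 - (fst x)^2) * cos (snd x)) *\<^sub>R f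
               + (sqrt (1 - (fst x)^2) * sin (snd x)) *\<^sub>R g"
  have cQ: "continuous_on UNIV ?Q" by (intro continuous_intros)
  have nzQ: "?Q ` ({-1..1} \<times> cbox 0 (2*pi)) \<subseteq> UNIV - {0}"
  proof (rule image_subsetI)
    fix x :: "real \<times> real" assume x: "x \<in> {-1..1} \<times> cbox 0 (2*pi)"
    then have "(fst x)^2 \<le> 1" by (auto simp: abs_square_le_1)
    then have "(fst x)^2 + (sqrt (1 - (fst x)^2) * cos (snd x))^2 + (sqrt (1 - (fst x)^2) * sin (snd x))^2 = 1"
      unfolding sq_id3 by simp
    then show "?Q x \<in> UNIV - {0}" using P_nz[OF fr] by simp
  qed
  have "continuous_on ({-1..1} \<times> cbox 0 (2*pi)) (\<lambda>x. K (?Q x))"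
    by (rule continuous_on_compose2[OF cont continuous_on_subset[OF cQ] nzQ]) simp
  then have "continuous_on ({-1..1} \<times> cbox 0 (2*pi))
       (\<lambda>(z, a). K (z *\<^sub>R n + sqrt (1 - z^2) *\<^sub>R (cos a *\<^sub>R f + sin a *\<^sub>R g)))"
    by (simp add: case_prod_beta scaleR_add_right add.assoc)
  from integral_continuous_on_param[OF this]
  have cM: "continuous_on {-1..1} (latmean K n f g)"
    unfolding latmean_def by (simp add: cbox_interval)
  have cm: "continuous_on {-1..1} (\<lambda>x. latmean K n f g (- x))"
    by (rule continuous_on_compose2[OF cM]) (auto intro!: continuous_intros)
  have T: "integral {0..2*pi} (\<lambda>t. latmean K n f g (- (r * cos t))) = 0" if "r \<in> {0..1}" for r
    by (rule funk_step[OF cont hom orth fr that])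
  have "latmean K n f g (- 1) + latmean K n f g (- (- 1)) = 0"
    using abel[OF cm T] by simp
  moreover have "latmean K n f g 1 = 2 * pi * K n" unfolding latmean_def by simp
  moreover have "latmean K n f g (- 1) = 2 * pi * K (- n)" unfolding latmean_def by simp
  moreover have fn: "f \<bullet> n = 0" using o1 by (simp add: inner_commute)
  moreover have "K (- n) = K n"
    by (rule K_even_unit[OF cont hom orth nf nn fn])
  ultimately have "4 * pi * K n = 0" by simp
  then show ?thesis by simp
qed

theorem corollaryB4:
  fixes K :: "real^3 \<Rightarrow> real"
  assumes cont: "continuous_on (UNIV - {0}) K"
    and bdd: "bounded (K ` (UNIV - {0}))"
    and hom: "\<And>(c::real) x. c > 0 \<Longrightarrow> x \<noteq> 0 \<Longrightarrow> K (c *\<^sub>R x) = K x"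
    and orth: "line_distance_orthogonal 1 K"
  shows "\<forall>x. x \<noteq> 0 \<longrightarrow> K x = 0"
proof (intro allI impI)
  fix x :: "real^3" assume x: "x \<noteq> 0"
  define n where "n = (1 / norm x) *\<^sub>R x"
  have nn: "norm n = 1" unfolding n_def using x by simp
  have "K x = K (norm x *\<^sub>R n)" unfolding n_def using x by simp
  also have "\<dots> = K n" by (rule hom) (use x nn in auto)
  also have "\<dots> = 0" by (rule K_unit_zero[OF cont hom orth nn])
  finally show "K x = 0" .
qed

end
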